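(* Let $L_a,L_b,L_c$ be Lagrangians in $\mathbf R^{2n}$ and let $(\mathbf e_a,\mathbf f_a)$, $(\mathbf e_b,\mathbf f_b)$, $(\mathbf e_c,\mathbf f_c)$ be symplectic bases such that $L_a=\mathrm{Span}(\mathbf e_c)=\mathrm{Span}(\mathbf f_b)=\mathrm{Span}(\mathbf e_a+\mathbf f_a)$, $L_b=\mathrm{Span}(\mathbf e_a)=\mathrm{Span}(\mathbf f_c)=\mathrm{Span}(\mathbf e_b+\mathbf f_b)$, $L_c=\mathrm{Span}(\mathbf e_b)=\mathrm{Span}(\mathbf f_a)=\mathrm{Span}(\mathbf e_c+\mathbf f_c)$. Let $A,B,C\in\mathrm{GL}(n,\mathbf R)$ be the matrices uniquely defined by $\mathbf f_b=-\mathbf e_c\cdot A$, $\mathbf f_c=-\mathbf e_a\cdot B$, $\mathbf f_a=-\mathbf e_b\cdot C$. Then $A,B,C$ are orthogonal and $CBA=-\mathrm{Id}$. Furthermore $\mathbf e_b=(\mathbf e_c+\mathbf f_c)\cdot A$, $\mathbf e_c=(\mathbf e_a+\mathbf f_a)\cdot B$, and $\mathbf e_a=(\mathbf e_b+\mathbf f_b)\cdot C$.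
   Context: $\mathbf R^{2n}$ carries the standard symplectic form $\omega(x,y)={}^T x\begin{pmatrix}0&\mathrm{Id}\\-\mathrm{Id}&0\end{pmatrix}y$; a Lagrangian is an $n$-dimensional subspace on which $\omega$ vanishes. A symplectic basis is a pair $(\mathbf e,\mathbf f)$ of $n$-tuples of vectors forming a basis with $\omega(e_i,e_j)=\omega(f_i,f_j)=0$ and $\omega(e_i,f_j)=\delta_{ij}$. For an $n$-tuple $\mathbf v=(v_1,\dots,v_n)$ and an $n\times n$ matrix $g$, $\mathbf v\cdot g$ is the $n$-tuple whose $j$-th entry is $\sum_i v_i g_{ij}$; $\mathbf v+\mathbf w$ is the termwise sum; $\mathrm{Span}(\mathbf v)$ is the span of its entries. *)

theory Defs
  imports "HOL-Analysis.Analysis"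
begin

text \<open>We model \<open>R^{2n}\<close> as pairs \<open>(x1, x2)\<close> of vectors in \<open>R^n\<close> (index type 'n, n = CARD('n)),
  i.e. the column vector with top half x1 and bottom half x2.  Then
  \<open>x^T [[0, Id], [-Id, 0]] y = x1 . y2 - x2 . y1\<close>.\<close>

type_synonym 'n sp = "(real^'n) \<times> (real^'n)"

definition omega :: "'n::finite sp \<Rightarrow> 'n sp \<Rightarrow> real" where
  "omega x y = fst x \<bullet> snd y - snd x \<bullet> fst y"

definition lagrangian :: "'n::finite sp set \<Rightarrow> bool" where
  "lagrangian L \<longleftrightarrow> subspace L \<and> dim L = CARD('n) \<and> (\<forall>x\<in>L. \<forall>y\<in>L. omega x y = 0)"

definition symplectic_basis :: "('n::finite \<Rightarrow> 'n sp) \<Rightarrow> ('n \<Rightarrow> 'n sp) \<Rightarrow> bool" where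
  "symplectic_basis e f \<longleftrightarrow>
     (let w = case_sum e f in inj w \<and> independent (range w) \<and> span (range w) = UNIV) \<and>
     (\<forall>i j. omega (e i) (e j) = 0 \<and> omega (f i) (f j) = 0 \<and>
            omega (e i) (f j) = (if i = j then 1 else 0))"

definition tmul :: "('n::finite \<Rightarrow> 'n sp) \<Rightarrow> real^'n^'n \<Rightarrow> ('n \<Rightarrow> 'n sp)" (infixl "\<cdot>\<^sub>t" 70) where
  "v \<cdot>\<^sub>t g = (\<lambda>j. \<Sum>i\<in>UNIV. (g $ i $ j) *\<^sub>R v i)"

definition tspan :: "('n::finite \<Rightarrow> 'n sp) \<Rightarrow> 'n sp set" where
  "tspan v = span (range v)"

definition tadd :: "('n::finite \<Rightarrow> 'n sp) \<Rightarrow> ('n \<Rightarrow> 'n sp) \<Rightarrow> ('n \<Rightarrow> 'n sp)" (infixl "+\<^sub>t" 65) where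
  "v +\<^sub>t w = (\<lambda>i. v i + w i)"

definition tneg :: "('n::finite \<Rightarrow> 'n sp) \<Rightarrow> ('n \<Rightarrow> 'n sp)" ("-\<^sub>t _" [81] 80) where
  "-\<^sub>t v = (\<lambda>i. - v i)"

end

theory Submission
  imports Defs
begin

lemma omega_add_left: "omega (x + y) z = omega x z + omega y z"
  by (simp add: omega_def inner_add_left inner_add_right)
lemma omega_add_right: "omega z (x + y) = omega z x + omega z y"
  by (simp add: omega_def inner_add_left inner_add_right)
lemma omega_scale_left: "omega (c *\<^sub>R x) z = c * omega x z"
  by (simp add: omega_def algebra_simps)
lemma omega_scale_right: "omega z (c *\<^sub>R x) = c * omega z x"
  by (simp add: omega_def algebra_simps)
lemma omega_neg_left: "omega (- x) z = - omega x z"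
  by (simp add: omega_def)
lemma omega_neg_right: "omega z (- x) = - omega z x"
  by (simp add: omega_def)
lemma omega_zero_left[simp]: "omega 0 z = 0" by (simp add: omega_def)
lemma omega_zero_right[simp]: "omega z 0 = 0" by (simp add: omega_def)
lemma omega_sum_left: "omega (sum g S) z = (\<Sum>i\<in>S. omega (g i) z)"
  by (induct S rule: infinite_finite_induct) (simp_all add: omega_add_left)
lemma omega_sum_right: "omega z (sum g S) = (\<Sum>i\<in>S. omega z (g i))"
  by (induct S rule: infinite_finite_induct) (simp_all add: omega_add_right)
lemma omega_diff_left: "omega (x - y) z = omega x z - omega y z"
  by (simp add: omega_def inner_diff_left)
lemma omega_skew: "omega x y = - omega y x"
  by (simp add: omega_def inner_commute)

lemma tmul_left: "omega ((v \<cdot>\<^sub>t g) j) z = (\<Sum>i\<in>UNIV. g $ i $ j * omega (v i) z)"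
  by (simp add: tmul_def omega_sum_left omega_scale_left)
lemma tmul_right: "omega z ((v \<cdot>\<^sub>t g) j) = (\<Sum>i\<in>UNIV. g $ i $ j * omega z (v i))"
  by (simp add: tmul_def omega_sum_right omega_scale_right)

lemma nondeg:
  assumes "symplectic_basis e f" "\<And>i. omega v (e i) = 0" "\<And>i. omega v (f i) = 0"
  shows "v = 0"
proof -
  have sp: "span (range (case_sum e f)) = UNIV" using assms(1) by (simp add: symplectic_basis_def Let_def)
  have "omega v w = 0" for w
  proof -
    have "w \<in> span (range (case_sum e f))" using sp by simp
    then show ?thesis
    proof (induct rule: span_induct_alt)
      case base then show ?case by (simp add: omega_def)
    next
      case (step c x y)
      then show ?case using assms(2,3)
        by (auto simp: omega_add_right omega_scale_right split: sum.splits)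
    qed
  qed
  from this[of "(- snd v, fst v)"] have "fst v \<bullet> fst v + snd v \<bullet> snd v = 0"
    by (simp add: omega_def)
  then have "fst v = 0" "snd v = 0"
    by (metis add_nonneg_eq_0_iff inner_eq_zero_iff inner_ge_zero)+
  then show ?thesis by (simp add: prod_eq_iff)
qed

lemma sb_omega:
  assumes "symplectic_basis e f"
  shows "omega (e i) (e j) = 0" "omega (f i) (f j) = 0" "omega (e i) (f j) = (if i = j then 1 else 0)"
    "omega (f i) (e j) = (if i = j then -1 else 0)"
  using assms unfolding symplectic_basis_def
  by (auto simp: omega_skew[of "f i"])

lemma iso: "lagrangian L \<Longrightarrow> x \<in> L \<Longrightarrow> y \<in> L \<Longrightarrow> omega x y = 0"
  by (simp add: lagrangian_def)

lemma in_tspan: "L = tspan v \<Longrightarrow> v i \<in> L"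
  by (simp add: tspan_def span_base)

lemma sum_delta: "(\<Sum>i\<in>UNIV. (g (i::_::finite) :: real) * (if i = k then 1 else 0)) = g k"
proof -
  have e: "(\<lambda>i. g i * (if i = k then 1 else 0)) = (\<lambda>i. if i = k then g i else 0)" by auto
  show ?thesis unfolding e by simp
qed
lemma sum_delta_neg: "(\<Sum>i\<in>UNIV. (g (i::_::finite) :: real) * (if i = k then -1 else 0)) = - g k"
proof -
  have e: "(\<lambda>i. g i * (if i = k then -1 else 0)) = (\<lambda>i. if i = k then - g i else 0)" by auto
  show ?thesis unfolding e by simp
qed

lemma tm_ef: "symplectic_basis e f \<Longrightarrow> omega ((e \<cdot>\<^sub>t g) j) (f k) = g $ k $ j"
  by (simp add: tmul_left sb_omega sum_delta)
lemma tm_ee: "symplectic_basis e f \<Longrightarrow> omega ((e \<cdot>\<^sub>t g) j) (e k) = 0"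
  by (simp add: tmul_left sb_omega)
lemma tm_fe: "symplectic_basis e f \<Longrightarrow> omega ((f \<cdot>\<^sub>t g) j) (e k) = - g $ k $ j"
  by (simp add: tmul_left sb_omega sum_delta_neg)
lemma tm_ff: "symplectic_basis e f \<Longrightarrow> omega ((f \<cdot>\<^sub>t g) j) (f k) = 0"
  by (simp add: tmul_left sb_omega)
lemma tmul_tadd: "((v +\<^sub>t w) \<cdot>\<^sub>t g) j = (v \<cdot>\<^sub>t g) j + (w \<cdot>\<^sub>t g) j"
  by (simp add: tmul_def tadd_def scaleR_add_right sum.distrib)
lemma tneg_app: "(-\<^sub>t v) j = - v j" by (simp add: tneg_def)
lemma tadd_app: "(v +\<^sub>t w) j = v j + w j" by (simp add: tadd_def)

lemma step:
  assumes sb: "symplectic_basis eb fb" and la: "lagrangian La" and lb: "lagrangian Lb"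
    and "Lb = tspan ea" "Lb = tspan (eb +\<^sub>t fb)" "La = tspan fb" "La = tspan (ea +\<^sub>t fa)"
    and fa: "fa = -\<^sub>t (eb \<cdot>\<^sub>t C)"
  shows "ea = (eb +\<^sub>t fb) \<cdot>\<^sub>t C"
proof
  fix j
  have w1: "omega (ea j) (fb k) = C $ k $ j" for k
  proof -
    have "omega (ea j + fa j) (fb k) = 0"
      using iso[OF la in_tspan[OF assms(7), of j] in_tspan[OF assms(6), of k]] by (simp add: tadd_def)
    moreover have "omega (fa j) (fb k) = - C $ k $ j"
      by (simp add: fa tneg_app omega_neg_left tm_ef[OF sb])
    ultimately show ?thesis by (simp add: omega_add_left)
  qed
  have w2: "omega (ea j) (eb k) = - C $ k $ j" for k
  proof -
    have "omega (ea j) (eb k + fb k) = 0"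
      using iso[OF lb in_tspan[OF assms(4), of j] in_tspan[OF assms(5), of k]] by (simp add: tadd_def)
    then show ?thesis using w1[of k] by (simp add: omega_add_right)
  qed
  have "ea j - ((eb +\<^sub>t fb) \<cdot>\<^sub>t C) j = 0"
  proof (rule nondeg[OF sb])
    fix k
    show "omega (ea j - ((eb +\<^sub>t fb) \<cdot>\<^sub>t C) j) (eb k) = 0"
      using w2[of k] by (simp add: omega_diff_left tmul_tadd omega_add_left tm_ee[OF sb] tm_fe[OF sb])
    show "omega (ea j - ((eb +\<^sub>t fb) \<cdot>\<^sub>t C) j) (fb k) = 0"
      using w1[of k] by (simp add: omega_diff_left tmul_tadd omega_add_left tm_ef[OF sb] tm_ff[OF sb])
  qed
  then show "ea j = ((eb +\<^sub>t fb) \<cdot>\<^sub>t C) j" by simp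
qed


lemma ortho:
  assumes sa: "symplectic_basis ea fa" and sb: "symplectic_basis eb fb"
    and ea: "ea = (eb +\<^sub>t fb) \<cdot>\<^sub>t C" and fa: "fa = -\<^sub>t (eb \<cdot>\<^sub>t C)"
  shows "orthogonal_matrix C"
proof -
  have "(transpose C ** C) $ j $ k = mat 1 $ j $ k" for j k
  proof -
    have "omega (ea j) (fa k) = (if j = k then 1 else 0)" using sb_omega[OF sa] by simp
    moreover have "omega (ea j) (fa k) = (\<Sum>i\<in>UNIV. C $ i $ j * C $ i $ k)"
      by (simp add: ea fa tneg_app omega_neg_right tmul_tadd omega_add_left tmul_right
          tm_fe[OF sb] tm_ee[OF sb] sum_negf mult_ac)
    ultimately show ?thesis by (simp add: matrix_matrix_mult_def transpose_def mat_def)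
  qed
  then show ?thesis by (simp add: orthogonal_matrix vec_eq_iff)
qed

lemma uniq:
  assumes sc: "symplectic_basis ec fc" and "fb = -\<^sub>t (ec \<cdot>\<^sub>t X)"
  shows "X $ k $ j = - omega (fb j) (fc k)"
  by (simp add: assms(2) tneg_app omega_neg_left tm_ef[OF sc])

lemma cba:
  assumes sb: "symplectic_basis eb fb"
    and fb: "fb = -\<^sub>t (ec \<cdot>\<^sub>t A)" and ec: "ec = (ea +\<^sub>t fa) \<cdot>\<^sub>t B"
    and ea: "ea = (eb +\<^sub>t fb) \<cdot>\<^sub>t C" and fa: "fa = -\<^sub>t (eb \<cdot>\<^sub>t C)"
  shows "C ** B ** A = - mat 1"
proof -
  have 1: "omega (eb k) (ea m + fa m) = C $ k $ m" for k m
    by (simp add: ea fa tneg_app omega_add_right omega_neg_right tmul_tadd omega_skew[of "eb k"]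
        tm_ef[OF sb] tm_ee[OF sb] tm_fe[OF sb])
  have 2: "omega (eb k) (ec l) = (C ** B) $ k $ l" for k l
    by (subst ec, simp add: tmul_right tadd_app 1 matrix_matrix_mult_def mult_ac)
  have "(C ** B ** A) $ k $ j = - mat 1 $ k $ j" for k j
  proof -
    have "omega (eb k) (fb j) = (if k = j then 1 else 0)" using sb_omega[OF sb] by simp
    moreover have "omega (eb k) (fb j) = - (C ** B ** A) $ k $ j"
      by (subst fb, simp add: tneg_app omega_neg_right tmul_right 2 matrix_matrix_mult_def mult_ac sum_negf)
    ultimately show ?thesis by (simp add: mat_def)
  qed
  then show ?thesis by (simp add: vec_eq_iff)
qed

theorem lemma3p8:
  fixes La Lb Lc :: "'n::finite sp set"
    and ea fa eb fb ec fc :: "'n \<Rightarrow> 'n sp"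
    and A B C :: "real^'n^'n"
  assumes "lagrangian La" "lagrangian Lb" "lagrangian Lc"
    and "symplectic_basis ea fa" "symplectic_basis eb fb" "symplectic_basis ec fc"
    and "La = tspan ec" "La = tspan fb" "La = tspan (ea +\<^sub>t fa)"
    and "Lb = tspan ea" "Lb = tspan fc" "Lb = tspan (eb +\<^sub>t fb)"
    and "Lc = tspan eb" "Lc = tspan fa" "Lc = tspan (ec +\<^sub>t fc)"
    and "invertible A" "invertible B" "invertible C"
    and "fb = -\<^sub>t (ec \<cdot>\<^sub>t A)" "fc = -\<^sub>t (ea \<cdot>\<^sub>t B)" "fa = -\<^sub>t (eb \<cdot>\<^sub>t C)"
  shows "(\<exists>!X. fb = -\<^sub>t (ec \<cdot>\<^sub>t X)) \<and> (\<exists>!X. fc = -\<^sub>t (ea \<cdot>\<^sub>t X)) \<and> (\<exists>!X. fa = -\<^sub>t (eb \<cdot>\<^sub>t X))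
    \<and> orthogonal_matrix A \<and> orthogonal_matrix B \<and> orthogonal_matrix C
    \<and> C ** B ** A = - mat 1
    \<and> eb = (ec +\<^sub>t fc) \<cdot>\<^sub>t A \<and> ec = (ea +\<^sub>t fa) \<cdot>\<^sub>t B \<and> ea = (eb +\<^sub>t fb) \<cdot>\<^sub>t C"
proof -
  note a = assms
  have la: "lagrangian La" and lb: "lagrangian Lb" and lc: "lagrangian Lc"
    and sa: "symplectic_basis ea fa" and sb: "symplectic_basis eb fb" and sc: "symplectic_basis ec fc"
    using a by auto
  have ea: "ea = (eb +\<^sub>t fb) \<cdot>\<^sub>t C" by (rule step[OF sb la lb a(10) a(12) a(8) a(9) a(21)])
  have eb: "eb = (ec +\<^sub>t fc) \<cdot>\<^sub>t A" by (rule step[OF sc lb lc a(13) a(15) a(11) a(12) a(19)])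
  have ec: "ec = (ea +\<^sub>t fa) \<cdot>\<^sub>t B" by (rule step[OF sa lc la a(7) a(9) a(14) a(15) a(20)])
  have u: "\<exists>!X. f = -\<^sub>t (e \<cdot>\<^sub>t X)"
    if "symplectic_basis e f'" "f = -\<^sub>t (e \<cdot>\<^sub>t Y)" for e f f' and Y :: "real^'n^'n"
  proof (rule ex1I[of _ Y])
    show "f = -\<^sub>t (e \<cdot>\<^sub>t Y)" by fact
    fix X assume hX: "f = -\<^sub>t (e \<cdot>\<^sub>t X)"
    then show "X = Y" using uniq[OF that(1) hX] uniq[OF that(1) that(2)] by (simp add: vec_eq_iff)
  qed
  show ?thesis
    using u[OF sc a(19)] u[OF sa a(20)] u[OF sb a(21)]
      ortho[OF sa sb ea a(21)] ortho[OF sb sc eb a(19)] ortho[OF sc sa ec a(20)]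
      cba[OF sb a(19) ec ea a(21)] ea eb ec by blast
qed

end
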